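(* Assume Hypothesis (LD). Let $[x]_\rho\subset M_1$ be a closed $\rho$-basic class. Then for every $\theta>0$ there exists $\delta>0$ such that every tuple $\xi=(\xi_0,\dots,\xi_n)$ with $\xi_0,\xi_n\in[x]_\rho$ and $A_n(\xi)\le\delta$ satisfies $\xi_i\in N^\theta([x]_\rho)$ for all $i=0,\dots,n$.
   Context: Setting. Let $M\subset\mathbb{R}^d$ be closed; all topological notions are relative to $M$. Let $F:M\to M$ be continuous with $\|F\|:=\sup_{x\in M}\|F(x)\|<\infty$. For $A\subset M$ and $\delta>0$, put $N^\delta(A)=\{x\in M:\inf_{y\in A}\|x-y\|<\delta\}$, and let $d(x,y)=\max_i|x_i-y_i|$. Let $\{X^\varepsilon\}_{\varepsilon>0}$ be a family of time-homogeneous Markov chains on $M$ with transition kernels $p^\varepsilon(x,\Gamma)$. Assume $M=M_0\cup M_1$ (disjoint), where $M_0$ is closed, $F(M_0)\subseteq M_0$, $F(M_1)\subseteq M_1$, and $p^\varepsilon(x,M_1)=0$ for all $\varepsilon>0$ and $x\in M_0$. $\rho$-chain recurrence. Given $\rho:M\times M\to[0,+\infty]$, for $\xi=(\xi_0,\dots,\xi_n)\in M^{n+1}$ set $A_n(\xi)=\sum_{i=0}^{n-1}\rho(\xi_i,\xi_{i+1})$. Set $B_\rho(x,y)=\inf\{A_n(\xi):n\ge1,\ \xi\in M^{n+1},\ \xi_0=x,\ \xi_n=y\}$. Write $x<_\rho y$ if $B_\rho(x,y)=0$, and $x\sim_\rho y$ if $x<_\rho y$ and $y<_\rho x$. Let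 $\mathcal{R}_\rho=\{x:x\sim_\rho x\}$. The $\rho$-basic classes are the equivalence classes $[x]_\rho$ of $\sim_\rho$ on $\mathcal{R}_\rho$. Hypothesis (LD). There is $\rho:M\times M\to[0,+\infty]$ such that: (i) $\rho$ is continuous on $M_1\times M$; (ii) $\rho(x,y)=0$ iff $y=F(x)$; (iii) for every $\beta>0$, $\inf\{\rho(x,y):x,y\in M,\ d(F(x),y)>\beta\}>0$; (iv) lower bound: for every compact $K\subset M_1$, every open ball $U$ of $M$ and every $\eta>0$, there is $\varepsilon_0>0$ such that $\varepsilon\log p^\varepsilon(x,U)\ge-\inf_{y\in U}\rho(x,y)-\eta$ for all $x\in K$ and $\varepsilon<\varepsilon_0$; (v) upper bound: for every closed $C\subset M$ and every $\eta>0$, there is $\varepsilon_0>0$ such that $\varepsilon\log p^\varepsilon(x,C)\le-\inf_{y\in C}\rho(x,y)+\eta$ for all $x\in M$ and $\varepsilon<\varepsilon_0$. *)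

theory Defs
  imports "HOL-Probability.Probability"
begin

definition dmax :: "real^'d \<Rightarrow> real^'d \<Rightarrow> real" where
  "dmax x y = Max (range (\<lambda>i. \<bar>x $ i - y $ i\<bar>))"

definition nbhd :: "(real^'d) set \<Rightarrow> real \<Rightarrow> (real^'d) set \<Rightarrow> (real^'d) set" where
  "nbhd M \<delta> A = {x \<in> M. (INF y\<in>A. norm (x - y)) < \<delta>}"

definition eln :: "real \<Rightarrow> ereal" where
  "eln p = (if p > 0 then ereal (ln p) else -\<infinity>)"

definition action :: "('a \<Rightarrow> 'a \<Rightarrow> ereal) \<Rightarrow> nat \<Rightarrow> (nat \<Rightarrow> 'a) \<Rightarrow> ereal" where
  "action \<rho> n \<xi> = (\<Sum>i<n. \<rho> (\<xi> i) (\<xi> (Suc i)))"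

definition Bcost :: "'a set \<Rightarrow> ('a \<Rightarrow> 'a \<Rightarrow> ereal) \<Rightarrow> 'a \<Rightarrow> 'a \<Rightarrow> ereal" where
  "Bcost M \<rho> x y = (INF p \<in> {(n, \<xi>). n \<ge> 1 \<and> (\<forall>i\<le>n. \<xi> i \<in> M) \<and> \<xi> 0 = x \<and> \<xi> n = y}.
                        action \<rho> (fst p) (snd p))"

definition rho_less :: "'a set \<Rightarrow> ('a \<Rightarrow> 'a \<Rightarrow> ereal) \<Rightarrow> 'a \<Rightarrow> 'a \<Rightarrow> bool" where
  "rho_less M \<rho> x y \<longleftrightarrow> Bcost M \<rho> x y = 0"

definition rho_equiv :: "'a set \<Rightarrow> ('a \<Rightarrow> 'a \<Rightarrow> ereal) \<Rightarrow> 'a \<Rightarrow> 'a \<Rightarrow> bool" where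
  "rho_equiv M \<rho> x y \<longleftrightarrow> rho_less M \<rho> x y \<and> rho_less M \<rho> y x"

definition rho_recurrent :: "'a set \<Rightarrow> ('a \<Rightarrow> 'a \<Rightarrow> ereal) \<Rightarrow> 'a set" where
  "rho_recurrent M \<rho> = {x \<in> M. rho_equiv M \<rho> x x}"

definition basic_class :: "'a set \<Rightarrow> ('a \<Rightarrow> 'a \<Rightarrow> ereal) \<Rightarrow> 'a \<Rightarrow> 'a set" where
  "basic_class M \<rho> x = {y \<in> rho_recurrent M \<rho>. rho_equiv M \<rho> x y}"

end

theory Submission
  imports Defs
begin

lemma dmax_ge: "\<bar>a $ j - b $ j\<bar> \<le> dmax a b"
  unfolding dmax_def by (rule Max_ge) auto

lemma dmax_norm: "norm (a - b) \<le> real CARD('d) * dmax a (b::real^'d)"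
proof -
  have "norm (a - b) \<le> (\<Sum>i\<in>UNIV. \<bar>(a - b) $ i\<bar>)" by (rule norm_le_l1_cart)
  also have "\<dots> \<le> (\<Sum>i\<in>(UNIV::'d set). dmax a b)"
    by (rule sum_mono) (simp add: dmax_ge)
  finally show ?thesis by simp
qed

lemma action_nonneg: "(\<And>y z. \<rho> y z \<ge> 0) \<Longrightarrow> action \<rho> n \<xi> \<ge> 0"
  unfolding action_def by (simp add: sum_nonneg)

lemma term_le_action: "(\<And>y z. \<rho> y z \<ge> 0) \<Longrightarrow> j < n \<Longrightarrow> \<rho> (\<xi> j) (\<xi> (Suc j)) \<le> action \<rho> n \<xi>"
  unfolding action_def using sum_mono2[of "{..<n}" "{j}" "(\<lambda>i. \<rho> (\<xi> i) (\<xi> (Suc i))) :: nat \<Rightarrow> ereal"] by auto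

lemma sum_le_mono: "(\<And>j. (f j::ereal) \<ge> 0) \<Longrightarrow> m \<le> (n::nat) \<Longrightarrow> (\<Sum>j<m. f j) \<le> (\<Sum>j<n. f j)"
  using sum_mono2[of "{..<n}" "{..<m}" f] by auto

lemma sum_shift_le: "(\<And>j. (f j::ereal) \<ge> 0) \<Longrightarrow> (\<Sum>j<m. f (s + j)) \<le> (\<Sum>j<s+(m::nat). f j)"
proof (induction m)
  case 0 then show ?case by (simp add: sum_nonneg)
next
  case (Suc m)
  then show ?case by (simp add: add_right_mono)
qed

lemma Bcost_nonneg: "(\<And>y z. \<rho> y z \<ge> 0) \<Longrightarrow> Bcost M \<rho> a b \<ge> 0"
  unfolding Bcost_def by (auto intro!: INF_greatest action_nonneg)

lemma Bcost_le: "n \<ge> 1 \<Longrightarrow> (\<forall>i\<le>n. \<xi> i \<in> M) \<Longrightarrow> Bcost M \<rho> (\<xi> 0) (\<xi> n) \<le> action \<rho> n \<xi>"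
  unfolding Bcost_def by (rule INF_lower2[of "(n, \<xi>)"]) auto

lemma action_concat:
  assumes "\<eta> m = \<xi> 0"
  shows "action \<rho> (m + n) (\<lambda>j. if j \<le> m then \<eta> j else \<xi> (j - m)) = action \<rho> m \<eta> + action \<rho> n \<xi>"
proof (induction n)
  case 0 then show ?case by (simp add: action_def)
next
  case (Suc n)
  have e1: "(if m + n \<le> m then \<eta> (m + n) else \<xi> (m + n - m)) = \<xi> n"
    using assms by auto
  show ?case using Suc e1 by (simp add: action_def add.assoc)
qed

lemma addle:
fixes u v w :: ereal and T :: "'c set" and f :: "'c \<Rightarrow> ereal"
assumes H: "\<And>t. t \<in> T \<Longrightarrow> u \<le> v + f t" and "w = (INF t\<in>T. f t)" "v \<ge> 0" "\<And>t. f t \<ge> 0"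
shows "u \<le> v + w"
proof (cases "v = \<infinity>")
  case True
  have "w \<ge> 0" unfolding assms(2) by (rule INF_greatest) (use assms(4) in auto)
  then show ?thesis using True by simp
next
  case False
  then obtain r where r: "v = ereal r" using assms(3) by (cases v) auto
  have "u - v \<le> w" unfolding assms(2)
  proof (rule INF_greatest)
    fix t assume "t \<in> T"
    then have "u \<le> v + f t" using assms(1) by blast
    then show "u - v \<le> f t" using r by (simp add: ereal_minus_le_iff add.commute)
  qed
  then show ?thesis using r by (simp add: ereal_minus_le_iff add.commute)
qed

lemma Bcost_tri:
  assumes nn: "\<And>y z. \<rho> y z \<ge> 0"
  shows "Bcost M \<rho> a c \<le> Bcost M \<rho> a b + Bcost M \<rho> b c"
proof -
  let ?S = "\<lambda>a b. {(n, \<xi>). n \<ge> 1 \<and> (\<forall>i\<le>n. \<xi> i \<in> M) \<and> \<xi> 0 = a \<and> \<xi> n = b}"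
  have key: "Bcost M \<rho> a c \<le> action \<rho> m \<eta> + action \<rho> n \<xi>"
    if "(m, \<eta>) \<in> ?S a b" "(n, \<xi>) \<in> ?S b c" for m n :: nat and \<eta> \<xi>
  proof -
    let ?z = "\<lambda>j. if j \<le> m then \<eta> j else \<xi> (j - m)"
    have "Bcost M \<rho> (?z 0) (?z (m + n)) \<le> action \<rho> (m + n) ?z"
      using that by (intro Bcost_le) auto
    moreover have "?z 0 = a" "?z (m + n) = c" using that by auto
    ultimately show ?thesis using action_concat[of \<eta> m \<xi> \<rho> n] that by auto
  qed
  have 1: "Bcost M \<rho> a c \<le> action \<rho> n \<xi> + Bcost M \<rho> a b" if "(n, \<xi>) \<in> ?S b c" for n :: nat and \<xi>
    apply (rule addle[where T="?S a b" and f="\<lambda>p. action \<rho> (fst p) (snd p)"])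
    subgoal for t using key[of "fst t" "snd t" n \<xi>] that by (cases t) (simp add: add.commute)
    subgoal by (simp add: Bcost_def)
    subgoal by (rule action_nonneg[OF nn])
    subgoal by (rule action_nonneg[OF nn])
    done
  show ?thesis
    apply (rule addle[where T="?S b c" and f="\<lambda>p. action \<rho> (fst p) (snd p)"])
    subgoal for t using 1[of "fst t" "snd t"] by (cases t) (simp add: add.commute)
    subgoal by (simp add: Bcost_def)
    subgoal by (rule Bcost_nonneg[OF nn])
    subgoal by (rule action_nonneg[OF nn])
    done
qed

theorem mainTheorem11:
  fixes M M0 M1 :: "(real^'d) set"
    and F :: "real^'d \<Rightarrow> real^'d"
    and P :: "real \<Rightarrow> real^'d \<Rightarrow> (real^'d) measure"
    and \<rho> :: "real^'d \<Rightarrow> real^'d \<Rightarrow> ereal"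
    and x :: "real^'d"
  assumes M_closed: "closed M"
    and M_split: "M = M0 \<union> M1" "M0 \<inter> M1 = {}"
    and M0_closed: "closed M0"
    and F_cont: "continuous_on M F"
    and F_maps: "F ` M \<subseteq> M"
    and F_bounded: "\<exists>B. \<forall>y\<in>M. norm (F y) \<le> B"
    and F_M0: "F ` M0 \<subseteq> M0"
    and F_M1: "F ` M1 \<subseteq> M1"
    and P_kernel: "\<And>\<epsilon>. \<epsilon> > 0 \<Longrightarrow>
          P \<epsilon> \<in> measurable (restrict_space borel M) (subprob_algebra (restrict_space borel M))"
    and P_prob: "\<And>\<epsilon> y. \<epsilon> > 0 \<Longrightarrow> y \<in> M \<Longrightarrow> prob_space (P \<epsilon> y)"
    and P_M0: "\<And>\<epsilon> y. \<epsilon> > 0 \<Longrightarrow> y \<in> M0 \<Longrightarrow> measure (P \<epsilon> y) M1 = 0"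
    and rho_nonneg: "\<And>y z. \<rho> y z \<ge> 0"
    and LD_i: "continuous_on (M1 \<times> M) (\<lambda>(y, z). \<rho> y z)"
    and LD_ii: "\<And>y z. y \<in> M \<Longrightarrow> z \<in> M \<Longrightarrow> (\<rho> y z = 0 \<longleftrightarrow> z = F y)"
    and LD_iii: "\<And>\<beta>. \<beta> > 0 \<Longrightarrow>
          0 < (INF p \<in> {(y, z). y \<in> M \<and> z \<in> M \<and> dmax (F y) z > \<beta>}. \<rho> (fst p) (snd p))"
    and LD_iv: "\<And>K c r \<eta>. compact K \<Longrightarrow> K \<subseteq> M1 \<Longrightarrow> c \<in> M \<Longrightarrow> r > 0 \<Longrightarrow> \<eta> > 0 \<Longrightarrow>
          \<exists>\<epsilon>0>0. \<forall>y\<in>K. \<forall>\<epsilon>. 0 < \<epsilon> \<and> \<epsilon> < \<epsilon>0 \<longrightarrow>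
             ereal \<epsilon> * eln (measure (P \<epsilon> y) {z \<in> M. norm (z - c) < r})
               \<ge> - (INF z \<in> {z \<in> M. norm (z - c) < r}. \<rho> y z) - ereal \<eta>"
    and LD_v: "\<And>C \<eta>. closed C \<Longrightarrow> C \<subseteq> M \<Longrightarrow> \<eta> > 0 \<Longrightarrow>
          \<exists>\<epsilon>0>0. \<forall>y\<in>M. \<forall>\<epsilon>. 0 < \<epsilon> \<and> \<epsilon> < \<epsilon>0 \<longrightarrow>
             ereal \<epsilon> * eln (measure (P \<epsilon> y) C)
               \<le> - (INF z \<in> C. \<rho> y z) + ereal \<eta>"
    and x_rec: "x \<in> rho_recurrent M \<rho>"
    and class_closed: "closed (basic_class M \<rho> x)"
    and class_M1: "basic_class M \<rho> x \<subseteq> M1"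
  shows "\<forall>\<theta>>0. \<exists>\<delta>>0. \<forall>n \<xi>. (\<forall>i\<le>n. \<xi> i \<in> M) \<and>
            \<xi> 0 \<in> basic_class M \<rho> x \<and> \<xi> n \<in> basic_class M \<rho> x \<and>
            action \<rho> n \<xi> \<le> ereal \<delta> \<longrightarrow>
            (\<forall>i\<le>n. \<xi> i \<in> nbhd M \<theta> (basic_class M \<rho> x))"
proof -
  define K where "K = basic_class M \<rho> x"
  have nn: "\<And>y z. \<rho> y z \<ge> 0" by (rule rho_nonneg)
  have KM: "K \<subseteq> M" unfolding K_def basic_class_def rho_recurrent_def by auto
  have xK: "x \<in> K" using x_rec unfolding K_def basic_class_def rho_recurrent_def by auto
  have Kx: "Bcost M \<rho> x z = 0 \<and> Bcost M \<rho> z x = 0" if "z \<in> K" for z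
    using that unfolding K_def basic_class_def rho_equiv_def rho_less_def by auto
  obtain Bd where Bd: "\<forall>y\<in>M. norm (F y) \<le> Bd" using F_bounded by auto
  define c where "c \<beta> = (INF p \<in> {(y, z). y \<in> M \<and> z \<in> M \<and> dmax (F y) z > \<beta>}. \<rho> (fst p) (snd p))" for \<beta>
  have cpos: "0 < c \<beta>" if "\<beta> > 0" for \<beta> using LD_iii[OF that] unfolding c_def by simp
  have cle: "dmax (F y) z \<le> \<beta>" if "\<beta> > 0" "y \<in> M" "z \<in> M" "\<rho> y z < c \<beta>" for \<beta> y z
  proof (rule ccontr)
    assume "\<not> ?thesis"
    then have "c \<beta> \<le> \<rho> y z" unfolding c_def using that by (intro INF_lower2[of "(y,z)"]) auto
    then show False using that by simp
  qed
  define R where "R = Bd + real CARD('d)"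
  have close_bound: "norm z \<le> R" if "y \<in> M" "z \<in> M" "\<rho> y z < c 1" for y z
  proof -
    have "dmax (F y) z \<le> 1" using cle[of 1 y z] that by simp
    then have "real CARD('d) * dmax (F y) z \<le> real CARD('d) * 1" by (intro mult_left_mono) auto
    then have "norm (F y - z) \<le> real CARD('d)"
      using dmax_norm[of "F y" z] by linarith
    moreover have "norm (F y) \<le> Bd" using Bd that by auto
    moreover have "norm z \<le> norm (F y) + norm (F y - z)"
      using norm_triangle_ineq2[of z "F y"] norm_minus_commute[of z "F y"] by linarith
    ultimately show ?thesis unfolding R_def by linarith
  qed
  have Kbd: "norm z \<le> R" if "z \<in> K" for z
  proof -
    have "Bcost M \<rho> x z < c 1" using Kx[OF that] cpos[of 1] by simp
    then obtain p where p: "p \<in> {(n, \<xi>). n \<ge> 1 \<and> (\<forall>i\<le>n. \<xi> i \<in> M) \<and> \<xi> 0 = x \<and> \<xi> n = z}"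
        "action \<rho> (fst p) (snd p) < c 1"
      unfolding Bcost_def INF_less_iff by blast
    obtain n \<xi> where pn: "p = (n, \<xi>)" by (cases p)
    with p have n1: "n \<ge> 1" and \<xi>M: "\<forall>i\<le>n. \<xi> i \<in> M" and \<xi>n: "\<xi> n = z" and act: "action \<rho> n \<xi> < c 1"
      by auto
    obtain m where nm: "n = Suc m" using n1 by (cases n) auto
    have "\<rho> (\<xi> m) (\<xi> (Suc m)) \<le> action \<rho> n \<xi>" using term_le_action[where \<rho>=\<rho> and j=m and n=n and \<xi>=\<xi>, OF nn] nm by simp
    then have "\<rho> (\<xi> m) z < c 1" using act \<xi>n nm by simp
    then show ?thesis using close_bound[of "\<xi> m" z] \<xi>M nm \<xi>n by auto
  qed
  have Kcompact: "compact K"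
    unfolding compact_eq_bounded_closed
  proof
    show "bounded K" by (rule bounded_subset[OF bounded_cball[of 0 R]]) (use Kbd in auto)
    show "closed K" using class_closed K_def by simp
  qed
  have KM0: "K \<inter> M0 = {}" using class_M1 M_split K_def by auto
  obtain d where dpos: "d > 0" and dsep: "\<forall>a\<in>K. \<forall>b\<in>M0. d \<le> dist a b"
    using separate_compact_closed[OF Kcompact M0_closed KM0] by auto
  have in_nbhd: "z \<in> nbhd M e K" if "z \<in> M" "w \<in> K" "norm (z - w) < e" for z w e
  proof -
    have "(INF y\<in>K. norm (z - y)) \<le> norm (z - w)"
      by (rule cINF_lower) (auto intro: bdd_belowI[where m=0] that)
    then show ?thesis unfolding nbhd_def using that by auto
  qed
  have nbhd_ex: "\<exists>w\<in>K. norm (z - w) < e" if "z \<in> nbhd M e K" for z e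
  proof -
    have "(INF y\<in>K. norm (z - y)) < e" using that unfolding nbhd_def by auto
    then show ?thesis using cInf_lessD[of "(\<lambda>y. norm (z - y)) ` K" e] xK by auto
  qed
  have nbhd_M: "z \<in> M" if "z \<in> nbhd M e K" for z e using that unfolding nbhd_def by auto
  have Kn: "K \<subseteq> nbhd M e K" if "e > 0" for e
    using in_nbhd[of _ _ e] that KM by auto
  have T: "q \<longlonglongrightarrow> F v" if "\<forall>k. p k \<in> M" "\<forall>k. q k \<in> M" "p \<longlonglongrightarrow> v" "v \<in> M"
    "(\<lambda>k. \<rho> (p k) (q k)) \<longlonglongrightarrow> 0" for p q v
  proof -
    have "(F \<circ> p) \<longlonglongrightarrow> F v" using F_cont that unfolding continuous_on_sequentially by blast
    then have Fp: "(\<lambda>k. F (p k)) \<longlonglongrightarrow> F v" by (simp add: o_def)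
    have "(\<lambda>k. q k - F (p k)) \<longlonglongrightarrow> 0"
      unfolding LIMSEQ_iff
    proof (intro allI impI)
      fix e :: real assume e: "e > 0"
      define \<beta> where "\<beta> = e / (2 * real CARD('d))"
      have \<beta>: "\<beta> > 0" using e unfolding \<beta>_def by simp
      have "eventually (\<lambda>k. \<rho> (p k) (q k) < c \<beta>) sequentially"
        using order_tendstoD(2)[OF that(5) cpos[OF \<beta>]] .
      then obtain no where no: "\<forall>k\<ge>no. \<rho> (p k) (q k) < c \<beta>" unfolding eventually_sequentially by auto
      have "norm (q k - F (p k) - 0) < e" if "k \<ge> no" for k
      proof -
        have "dmax (F (p k)) (q k) \<le> \<beta>" using cle[OF \<beta>] no that \<open>\<forall>k. p k \<in> M\<close> \<open>\<forall>k. q k \<in> M\<close> by auto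
        then have "real CARD('d) * dmax (F (p k)) (q k) \<le> real CARD('d) * \<beta>" by (intro mult_left_mono) auto
        then have "norm (F (p k) - q k) \<le> real CARD('d) * \<beta>"
          using dmax_norm[of "F (p k)" "q k"] by linarith
        also have "\<dots> = e / 2" unfolding \<beta>_def by simp
        finally show ?thesis using e by (simp add: norm_minus_commute)
      qed
      then show "\<exists>no. \<forall>k\<ge>no. norm (q k - F (p k) - 0) < e" by blast
    qed
    then show ?thesis using Lim_transform[OF Fp] by blast
  qed
  have goalK: "\<forall>\<theta>>0. \<exists>\<delta>>0. \<forall>n \<xi>. (\<forall>i\<le>n. \<xi> i \<in> M) \<and> \<xi> 0 \<in> K \<and> \<xi> n \<in> K \<and>
            action \<rho> n \<xi> \<le> ereal \<delta> \<longrightarrow> (\<forall>i\<le>n. \<xi> i \<in> nbhd M \<theta> K)"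
  proof (intro allI impI)
    fix \<theta> :: real assume \<theta>: "\<theta> > 0"
    define \<theta>' where "\<theta>' = min \<theta> (d / 2)"
    have \<theta>': "\<theta>' > 0" "\<theta>' \<le> \<theta>" "\<theta>' \<le> d / 2" using \<theta> dpos unfolding \<theta>'_def by auto
    have claim: "\<exists>\<delta>>0. \<forall>n \<xi>. (\<forall>i\<le>n. \<xi> i \<in> M) \<and> \<xi> 0 \<in> K \<and> \<xi> n \<in> K \<and>
            action \<rho> n \<xi> \<le> ereal \<delta> \<longrightarrow> (\<forall>i\<le>n. \<xi> i \<in> nbhd M \<theta>' K)"
    proof (rule ccontr)
      assume neg: "\<not> ?thesis"
      have "\<forall>k. \<exists>p. (\<forall>i\<le>fst p. snd p i \<in> M) \<and> snd p 0 \<in> K \<and> snd p (fst p) \<in> K \<and>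
              action \<rho> (fst p) (snd p) \<le> ereal (inverse (real (Suc k))) \<and>
              (\<exists>i\<le>fst p. snd p i \<notin> nbhd M \<theta>' K)"
      proof
        fix k
        have "inverse (real (Suc k)) > 0" by simp
        then obtain n \<xi> where "(\<forall>i\<le>n. \<xi> i \<in> M) \<and> \<xi> 0 \<in> K \<and> \<xi> n \<in> K \<and>
            action \<rho> n \<xi> \<le> ereal (inverse (real (Suc k))) \<and> (\<exists>i\<le>n. \<xi> i \<notin> nbhd M \<theta>' K)"
          using neg by blast
        then show "\<exists>p. (\<forall>i\<le>fst p. snd p i \<in> M) \<and> snd p 0 \<in> K \<and> snd p (fst p) \<in> K \<and>
              action \<rho> (fst p) (snd p) \<le> ereal (inverse (real (Suc k))) \<and>
              (\<exists>i\<le>fst p. snd p i \<notin> nbhd M \<theta>' K)"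
          by (intro exI[of _ "(n, \<xi>)"]) auto
      qed
      from choice[OF this] obtain f where f: "\<forall>k. (\<forall>i\<le>fst (f k). snd (f k) i \<in> M) \<and> snd (f k) 0 \<in> K \<and>
              snd (f k) (fst (f k)) \<in> K \<and>
              action \<rho> (fst (f k)) (snd (f k)) \<le> ereal (inverse (real (Suc k))) \<and>
              (\<exists>i\<le>fst (f k). snd (f k) i \<notin> nbhd M \<theta>' K)" by blast
      define N where "N k = fst (f k)" for k
      define X where "X k = snd (f k)" for k
      define I where "I k = (LEAST i. i \<le> N k \<and> X k i \<notin> nbhd M \<theta>' K)" for k
      have XM: "\<And>k i. i \<le> N k \<Longrightarrow> X k i \<in> M" using f unfolding N_def X_def by auto
      have X0: "\<And>k. X k 0 \<in> K" using f unfolding X_def by auto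
      have XN: "\<And>k. X k (N k) \<in> K" using f unfolding N_def X_def by auto
      have Xact: "\<And>k. action \<rho> (N k) (X k) \<le> ereal (inverse (real (Suc k)))"
        using f unfolding N_def X_def by auto
      have Iprop: "I k \<le> N k \<and> X k (I k) \<notin> nbhd M \<theta>' K" for k
      proof -
        have "\<exists>i. i \<le> N k \<and> X k i \<notin> nbhd M \<theta>' K" using f unfolding N_def X_def by auto
        then show ?thesis unfolding I_def by (rule LeastI_ex)
      qed
      have Imin: "X k j \<in> nbhd M \<theta>' K" if "j < I k" for k j
      proof -
        have "j \<le> N k" using Iprop[of k] that by simp
        then show ?thesis using not_less_Least[of j "\<lambda>i. i \<le> N k \<and> X k i \<notin> nbhd M \<theta>' K"] that
          unfolding I_def by auto
      qed
      have I0: "I k \<noteq> 0" for k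
      proof
        assume "I k = 0"
        then show False using Iprop[of k] X0[of k] Kn[OF \<theta>'(1)] by auto
      qed
      have IN: "I k < N k" for k
      proof -
        have "I k \<noteq> N k"
        proof
          assume "I k = N k"
          then show False using Iprop[of k] XN[of k] Kn[OF \<theta>'(1)] by auto
        qed
        then show ?thesis using Iprop[of k] by simp
      qed
      define a where "a k = X k (I k - 1)" for k
      define b where "b k = X k (I k)" for k
      define cc where "cc k = X k (Suc (I k))" for k
      have aM: "a k \<in> M" and bM: "b k \<in> M" and cM: "cc k \<in> M" for k
        unfolding a_def b_def cc_def using XM Iprop[of k] IN[of k] by auto
      have anb: "a k \<in> nbhd M \<theta>' K" for k unfolding a_def using Imin[of "I k - 1" k] I0[of k] by simp
      have bnb: "b k \<notin> nbhd M \<theta>' K" for k unfolding b_def using Iprop by auto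
      have \<rho>ab: "\<rho> (a k) (b k) \<le> ereal (inverse (real (Suc k)))" for k
      proof -
        have "\<rho> (X k (I k - 1)) (X k (Suc (I k - 1))) \<le> action \<rho> (N k) (X k)"
          using term_le_action[where \<rho>=\<rho> and j="I k - 1" and n="N k" and \<xi>="X k", OF nn] IN[of k] by simp
        then show ?thesis unfolding a_def b_def using I0[of k] Xact[of k] by simp
      qed
      have \<rho>bc: "\<rho> (b k) (cc k) \<le> ereal (inverse (real (Suc k)))" for k
      proof -
        have "\<rho> (X k (I k)) (X k (Suc (I k))) \<le> action \<rho> (N k) (X k)"
          using term_le_action[where \<rho>=\<rho> and j="I k" and n="N k" and \<xi>="X k", OF nn] IN[of k] by simp
        then show ?thesis unfolding b_def cc_def using Xact[of k] by simp
      qed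
      define S where "S = M \<inter> cball 0 (R + \<theta>')"
      have Scomp: "compact S" unfolding S_def by (rule closed_Int_compact[OF M_closed compact_cball])
      have aS: "a k \<in> S" for k
      proof -
        obtain w where w: "w \<in> K" "norm (a k - w) < \<theta>'" using nbhd_ex[OF anb[of k]] by auto
        have "norm (a k) \<le> norm w + norm (a k - w)" using norm_triangle_ineq4[of w "w - a k"]
          by (simp add: norm_minus_commute)
        then show ?thesis unfolding S_def using Kbd[OF w(1)] w aM[of k] by auto
      qed
      have "\<exists>l\<in>S. \<exists>r. strict_mono r \<and> (a \<circ> r) \<longlonglongrightarrow> l"
        using Scomp aS unfolding compact_def by blast
      then obtain u r where uS: "u \<in> S" and rmono: "strict_mono r" and ulim: "(a \<circ> r) \<longlonglongrightarrow> u"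
        by blast
      have uM: "u \<in> M" using uS S_def by auto
      have uM1: "u \<in> M1"
      proof (rule ccontr)
        assume "u \<notin> M1"
        then have uM0: "u \<in> M0" using uM M_split by auto
        have "eventually (\<lambda>k. dist ((a \<circ> r) k) u < d / 2) sequentially"
          using tendstoD[OF ulim, of "d/2"] dpos by simp
        then obtain k where k: "dist (a (r k)) u < d / 2" unfolding eventually_sequentially by auto
        obtain w where w: "w \<in> K" "norm (a (r k) - w) < \<theta>'" using nbhd_ex[OF anb[of "r k"]] by auto
        have "dist w u \<le> dist w (a (r k)) + dist (a (r k)) u" by (rule dist_triangle)
        also have "\<dots> < d" using w k \<theta>' by (simp add: dist_norm norm_minus_commute)
        finally show False using dsep w uM0 by fastforce
      qed
      define y where "y = F u"
      have yM: "y \<in> M" and yM1: "y \<in> M1" using uM uM1 F_maps F_M1 unfolding y_def by auto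
      have elim: "(\<lambda>k. ereal (inverse (real (Suc (r k))))) \<longlonglongrightarrow> 0"
      proof -
        have "((\<lambda>n. inverse (real (Suc n))) \<circ> r) \<longlonglongrightarrow> 0"
          by (rule LIMSEQ_subseq_LIMSEQ[OF LIMSEQ_inverse_real_of_nat rmono])
        then have "(\<lambda>k. ereal (inverse (real (Suc (r k))))) \<longlonglongrightarrow> ereal 0"
          by (intro tendsto_ereal) (simp add: o_def)
        then show ?thesis by (simp add: zero_ereal_def)
      qed
      have sq: "(\<lambda>k. \<rho> (p k) (q k)) \<longlonglongrightarrow> 0"
        if "\<And>k. \<rho> (p k) (q k) \<le> ereal (inverse (real (Suc (r k))))" for p q
        apply (rule tendsto_sandwich[OF _ _ tendsto_const elim])
        subgoal by (simp add: nn)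
        subgoal by (rule always_eventually) (use that in blast)
        done
      have ab0: "(\<lambda>k. \<rho> (a (r k)) (b (r k))) \<longlonglongrightarrow> 0" by (rule sq) (rule \<rho>ab)
      have bc0: "(\<lambda>k. \<rho> (b (r k)) (cc (r k))) \<longlonglongrightarrow> 0" by (rule sq) (rule \<rho>bc)
      have blim: "(\<lambda>k. b (r k)) \<longlonglongrightarrow> y" unfolding y_def
        by (rule T[of "\<lambda>k. a (r k)"]) (use aM bM ulim uM ab0 in \<open>auto simp: o_def\<close>)
      have clim: "(\<lambda>k. cc (r k)) \<longlonglongrightarrow> F y"
        by (rule T[of "\<lambda>k. b (r k)"]) (use bM cM blim yM bc0 in auto)
      have aM1: "a k \<in> M1" for k
      proof (rule ccontr)
        assume "a k \<notin> M1"
        then have "a k \<in> M0" using aM M_split by auto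
        moreover obtain w where w: "w \<in> K" "norm (a k - w) < \<theta>'" using nbhd_ex[OF anb[of k]] by auto
        ultimately have "d \<le> dist w (a k)" using dsep by auto
        then show False using w \<theta>' dpos by (simp add: dist_norm norm_minus_commute)
      qed
      have \<rho>cont: "(\<lambda>k. \<rho> (s k) (t k)) \<longlonglongrightarrow> \<rho> s0 t0"
        if "\<forall>k. s k \<in> M1" "\<forall>k. t k \<in> M" "s \<longlonglongrightarrow> s0" "t \<longlonglongrightarrow> t0" "s0 \<in> M1" "t0 \<in> M" for s t s0 t0
      proof -
        have "((\<lambda>(y, z). \<rho> y z) \<circ> (\<lambda>k. (s k, t k))) \<longlonglongrightarrow> (\<lambda>(y, z). \<rho> y z) (s0, t0)"
        proof -
          have "(\<lambda>k. (s k, t k)) \<longlonglongrightarrow> (s0, t0)" using that by (intro tendsto_Pair)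
          moreover have "\<forall>k. (s k, t k) \<in> M1 \<times> M" "(s0, t0) \<in> M1 \<times> M" using that by auto
          ultimately show ?thesis
            using mp[OF bspec[OF spec[OF LD_i[unfolded continuous_on_sequentially], of "\<lambda>k. (s k, t k)"], of "(s0, t0)"]]
            by simp
        qed
        then show ?thesis by (simp add: o_def)
      qed
      have ay0: "(\<lambda>k. \<rho> (a (r k)) y) \<longlonglongrightarrow> 0"
      proof -
        have "(\<lambda>k. \<rho> (a (r k)) y) \<longlonglongrightarrow> \<rho> u y"
          by (rule \<rho>cont) (use aM1 yM ulim uM1 in \<open>auto simp: o_def\<close>)
        moreover have "\<rho> u y = 0" using LD_ii[OF uM yM] y_def by simp
        ultimately show ?thesis by simp
      qed
      have yc0: "(\<lambda>k. \<rho> y (cc (r k))) \<longlonglongrightarrow> 0"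
      proof -
        have "(\<lambda>k. \<rho> y (cc (r k))) \<longlonglongrightarrow> \<rho> y (F y)"
          by (rule \<rho>cont) (use yM1 cM clim yM F_maps in auto)
        moreover have "\<rho> y (F y) = 0" using LD_ii[OF yM] yM F_maps by auto
        ultimately show ?thesis by simp
      qed
      have Bxy_le: "Bcost M \<rho> x y \<le> ereal (inverse (real (Suc (r k)))) + \<rho> (a (r k)) y" for k
      proof -
        define n where "n = N (r k)"
        define \<xi> where "\<xi> = X (r k)"
        define i where "i = I (r k)"
        obtain m where im: "i = Suc m" using I0[of "r k"] unfolding i_def by (cases "I (r k)") auto
        have in_: "i < n" using IN unfolding i_def n_def by simp
        define \<xi>' where "\<xi>' = \<xi>(i := y)"
        have F1: "Bcost M \<rho> (\<xi>' 0) (\<xi>' i) \<le> action \<rho> i \<xi>'"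
          by (rule Bcost_le) (use im in_ XM yM in \<open>auto simp: \<xi>'_def \<xi>_def n_def\<close>)
        have F2: "\<xi>' 0 = \<xi> 0" "\<xi>' i = y" unfolding \<xi>'_def using im by auto
        have F3: "action \<rho> i \<xi>' = (\<Sum>j<m. \<rho> (\<xi> j) (\<xi> (Suc j))) + \<rho> (\<xi> m) y"
        proof -
          have "(\<Sum>j<m. \<rho> (\<xi>' j) (\<xi>' (Suc j))) = (\<Sum>j<m. \<rho> (\<xi> j) (\<xi> (Suc j)))"
            by (rule sum.cong) (auto simp: \<xi>'_def im)
          then show ?thesis unfolding action_def by (simp add: \<xi>'_def im)
        qed
        have F4: "(\<Sum>j<m. \<rho> (\<xi> j) (\<xi> (Suc j))) \<le> action \<rho> n \<xi>"
          unfolding action_def by (rule sum_le_mono) (use nn im in_ in auto)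
        have F5: "action \<rho> n \<xi> \<le> ereal (inverse (real (Suc (r k))))"
          using Xact unfolding n_def \<xi>_def by simp
        have F6: "\<xi> m = a (r k)" unfolding a_def \<xi>_def using im i_def by simp
        have A: "Bcost M \<rho> (\<xi> 0) y \<le> (\<Sum>j<m. \<rho> (\<xi> j) (\<xi> (Suc j))) + \<rho> (a (r k)) y"
          using F1 F2 F3 F6 by simp
        have B: "(\<Sum>j<m. \<rho> (\<xi> j) (\<xi> (Suc j))) \<le> ereal (inverse (real (Suc (r k))))"
          using F4 F5 by (rule order_trans)
        have "Bcost M \<rho> x y \<le> Bcost M \<rho> x (\<xi> 0) + Bcost M \<rho> (\<xi> 0) y" by (rule Bcost_tri[OF nn])
        also have "Bcost M \<rho> x (\<xi> 0) = 0" using Kx X0 unfolding \<xi>_def by auto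
        also have "0 + Bcost M \<rho> (\<xi> 0) y \<le> (\<Sum>j<m. \<rho> (\<xi> j) (\<xi> (Suc j))) + \<rho> (a (r k)) y" using A by simp
        also have "\<dots> \<le> ereal (inverse (real (Suc (r k)))) + \<rho> (a (r k)) y" by (rule add_right_mono[OF B])
        finally show ?thesis .
      qed
      have Byx_le: "Bcost M \<rho> y x \<le> \<rho> y (cc (r k)) + ereal (inverse (real (Suc (r k))))" for k
      proof -
        define n where "n = N (r k)"
        define \<xi> where "\<xi> = X (r k)"
        define i where "i = I (r k)"
        have in_: "i < n" using IN unfolding i_def n_def by simp
        obtain m where nm: "n - i = Suc m" using in_ by (cases "n - i") auto
        define \<xi>' where "\<xi>' = (\<lambda>j. if j = 0 then y else \<xi> (i + j))"
        have F1: "Bcost M \<rho> (\<xi>' 0) (\<xi>' (Suc m)) \<le> action \<rho> (Suc m) \<xi>'"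
          by (rule Bcost_le) (use nm in_ XM yM in \<open>auto simp: \<xi>'_def \<xi>_def n_def\<close>)
        have F2: "\<xi>' 0 = y" "\<xi>' (Suc m) = \<xi> n" unfolding \<xi>'_def using nm in_ by (auto simp: Suc_diff_Suc[symmetric] intro!: arg_cong[where f=\<xi>])
        have F3: "action \<rho> (Suc m) \<xi>' = \<rho> y (\<xi> (Suc i)) + (\<Sum>j<m. \<rho> (\<xi> (Suc i + j)) (\<xi> (Suc (Suc i + j))))"
          unfolding action_def sum.lessThan_Suc_shift by (simp add: \<xi>'_def)
        have F4: "(\<Sum>j<m. \<rho> (\<xi> (Suc i + j)) (\<xi> (Suc (Suc i + j)))) \<le> (\<Sum>j<Suc i + m. \<rho> (\<xi> j) (\<xi> (Suc j)))"
          by (rule sum_shift_le[where f="\<lambda>j. \<rho> (\<xi> j) (\<xi> (Suc j))"]) (rule nn)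
        have F45: "Suc i + m = n" using nm in_ by simp
        have F5: "action \<rho> n \<xi> \<le> ereal (inverse (real (Suc (r k))))"
          using Xact unfolding n_def \<xi>_def by simp
        have F6: "\<xi> (Suc i) = cc (r k)" unfolding cc_def \<xi>_def i_def by simp
        have A: "Bcost M \<rho> y (\<xi> n) \<le> \<rho> y (cc (r k)) + (\<Sum>j<m. \<rho> (\<xi> (Suc i + j)) (\<xi> (Suc (Suc i + j))))"
          using F1 F2 F3 F6 by simp
        have B: "(\<Sum>j<m. \<rho> (\<xi> (Suc i + j)) (\<xi> (Suc (Suc i + j)))) \<le> ereal (inverse (real (Suc (r k))))"
          using F4 F5 unfolding F45 action_def by (rule order_trans)
        have "Bcost M \<rho> y x \<le> Bcost M \<rho> y (\<xi> n) + Bcost M \<rho> (\<xi> n) x" by (rule Bcost_tri[OF nn])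
        also have "Bcost M \<rho> (\<xi> n) x = 0" using Kx XN unfolding \<xi>_def n_def by auto
        also have "Bcost M \<rho> y (\<xi> n) + 0 \<le> \<rho> y (cc (r k)) + (\<Sum>j<m. \<rho> (\<xi> (Suc i + j)) (\<xi> (Suc (Suc i + j))))" using A by simp
        also have "\<dots> \<le> \<rho> y (cc (r k)) + ereal (inverse (real (Suc (r k))))" by (rule add_left_mono[OF B])
        finally show ?thesis .
      qed
      have Bxy: "Bcost M \<rho> x y = 0"
      proof -
        have "(\<lambda>k. ereal (inverse (real (Suc (r k)))) + \<rho> (a (r k)) y) \<longlonglongrightarrow> 0 + 0"
          by (rule tendsto_add_ereal) (use elim ay0 in auto)
        then have "Bcost M \<rho> x y \<le> 0"
          by (intro tendsto_le[OF trivial_limit_sequentially _ tendsto_const]) (use Bxy_le in auto)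
        then show ?thesis using Bcost_nonneg[where \<rho>=\<rho> and M=M and a=x and b=y, OF nn] by simp
      qed
      have Byx: "Bcost M \<rho> y x = 0"
      proof -
        have "(\<lambda>k. \<rho> y (cc (r k)) + ereal (inverse (real (Suc (r k))))) \<longlonglongrightarrow> 0 + 0"
          by (rule tendsto_add_ereal) (use elim yc0 in auto)
        then have "Bcost M \<rho> y x \<le> 0"
          by (intro tendsto_le[OF trivial_limit_sequentially _ tendsto_const]) (use Byx_le in auto)
        then show ?thesis using Bcost_nonneg[where \<rho>=\<rho> and M=M and a=y and b=x, OF nn] by simp
      qed
      have Byy: "Bcost M \<rho> y y = 0"
        using Bcost_tri[where \<rho>=\<rho> and M=M and a=y and b=x and c=y, OF nn] Bxy Byx Bcost_nonneg[where \<rho>=\<rho> and M=M and a=y and b=y, OF nn] by simp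
      have yK: "y \<in> K"
        unfolding K_def basic_class_def rho_recurrent_def rho_equiv_def rho_less_def
        using yM Bxy Byx Byy by simp
      have far: "\<theta>' \<le> norm (b (r k) - y)" for k
        using in_nbhd[OF bM[of "r k"] yK] bnb[of "r k"] by force
      have "eventually (\<lambda>k. dist (b (r k)) y < \<theta>') sequentially"
        using tendstoD[OF blim \<theta>'(1)] .
      then obtain k where "dist (b (r k)) y < \<theta>'" unfolding eventually_sequentially by auto
      then show False using far[of k] by (simp add: dist_norm)
    qed
    then obtain \<delta> where \<delta>: "\<delta> > 0" "\<forall>n \<xi>. (\<forall>i\<le>n. \<xi> i \<in> M) \<and> \<xi> 0 \<in> K \<and> \<xi> n \<in> K \<and>
            action \<rho> n \<xi> \<le> ereal \<delta> \<longrightarrow> (\<forall>i\<le>n. \<xi> i \<in> nbhd M \<theta>' K)" by blast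
    have mono: "nbhd M \<theta>' K \<subseteq> nbhd M \<theta> K" unfolding nbhd_def using \<theta>' by auto
    show "\<exists>\<delta>>0. \<forall>n \<xi>. (\<forall>i\<le>n. \<xi> i \<in> M) \<and> \<xi> 0 \<in> K \<and> \<xi> n \<in> K \<and>
            action \<rho> n \<xi> \<le> ereal \<delta> \<longrightarrow> (\<forall>i\<le>n. \<xi> i \<in> nbhd M \<theta> K)"
      using \<delta> mono by blast
  qed
  show ?thesis using goalK unfolding K_def .
qed

end
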